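(* Every graph $G$ with $n\geq 3$ vertices that has no $K_5$-minor satisfies $c(G)\leq 8(n-2)$.
   Context: All graphs are finite, simple and undirected. A graph $H$ is a minor of $G$ if $H$ can be obtained from a subgraph of $G$ by contracting edges. A clique of a graph $G$ is a (possibly empty) set of pairwise adjacent vertices; $c(G)$ denotes the number of cliques of $G$ (including the empty clique, all single vertices and all edges). *)

theory Defs
  imports Main
begin

definition simple_graph :: "'a set \<Rightarrow> 'a set set \<Rightarrow> bool" where
  "simple_graph V E \<longleftrightarrow> finite V \<and>
     (\<forall>e\<in>E. \<exists>x y. x \<noteq> y \<and> x \<in> V \<and> y \<in> V \<and> e = {x, y})"

inductive minor_step :: "'a set \<times> 'a set set \<Rightarrow> 'a set \<times> 'a set set \<Rightarrow> bool" where
  del_vertex: "v \<in> V \<Longrightarrow> minor_step (V, E) (V - {v}, {e \<in> E. v \<notin> e})"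
| del_edge: "e \<in> E \<Longrightarrow> minor_step (V, E) (V, E - {e})"
| contract: "{u, v} \<in> E \<Longrightarrow> u \<noteq> v \<Longrightarrow>
    minor_step (V, E) (V - {v}, {e \<in> E. v \<notin> e} \<union> {{u, w} | w. {v, w} \<in> E \<and> w \<noteq> u})"

definition is_minor :: "'a set \<times> 'a set set \<Rightarrow> 'a set \<times> 'a set set \<Rightarrow> bool" where
  "is_minor H G \<longleftrightarrow> minor_step\<^sup>*\<^sup>* G H"

definition has_K5_minor :: "'a set \<Rightarrow> 'a set set \<Rightarrow> bool" where
  "has_K5_minor V E \<longleftrightarrow> (\<exists>V' E'. is_minor (V', E') (V, E) \<and> card V' = 5 \<and>
      (\<forall>x\<in>V'. \<forall>y\<in>V'. x \<noteq> y \<longrightarrow> {x, y} \<in> E'))"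

definition is_clique :: "'a set \<Rightarrow> 'a set set \<Rightarrow> 'a set \<Rightarrow> bool" where
  "is_clique V E S \<longleftrightarrow> S \<subseteq> V \<and> (\<forall>x\<in>S. \<forall>y\<in>S. x \<noteq> y \<longrightarrow> {x, y} \<in> E)"

text \<open>c(G): number of cliques, including the empty clique.\<close>
definition num_cliques :: "'a set \<Rightarrow> 'a set set \<Rightarrow> nat" where
  "num_cliques V E = card {S. is_clique V E S}"

end

theory Submission
  imports Defs
begin


definition nbr :: "'a set set \<Rightarrow> 'a \<Rightarrow> 'a set" where
  "nbr E x = {y. {x, y} \<in> E}"

definition cE :: "'a set set \<Rightarrow> 'a \<Rightarrow> 'a \<Rightarrow> 'a set set" where
  "cE E u v = {e \<in> E. v \<notin> e} \<union> {{u, w} | w. {v, w} \<in> E \<and> w \<noteq> u}"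

lemma sg_edge:
  assumes "simple_graph V E" "{x, y} \<in> E"
  shows "x \<noteq> y \<and> x \<in> V \<and> y \<in> V"
proof -
  obtain a b where "a \<noteq> b" "a \<in> V" "b \<in> V" "{x, y} = {a, b}"
    using assms unfolding simple_graph_def by blast
  then show ?thesis by (auto simp: doubleton_eq_iff)
qed

lemma sg_fin: "simple_graph V E \<Longrightarrow> finite V"
  by (simp add: simple_graph_def)

lemma sg_edges_sub: "simple_graph V E \<Longrightarrow> E \<subseteq> Pow V"
proof
  fix e assume "simple_graph V E" "e \<in> E"
  then obtain x y where "x \<in> V" "y \<in> V" "e = {x, y}" unfolding simple_graph_def by meson
  then show "e \<in> Pow V" by auto
qed

lemma sg_finE: "simple_graph V E \<Longrightarrow> finite E"
  using sg_edges_sub sg_fin by (metis finite_Pow_iff finite_subset)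

lemma sg_edge_form: "simple_graph V E \<Longrightarrow> e \<in> E \<Longrightarrow> \<exists>x y. x \<noteq> y \<and> x \<in> V \<and> y \<in> V \<and> e = {x, y}"
  unfolding simple_graph_def by blast

lemma nbr_sub: "simple_graph V E \<Longrightarrow> nbr E x \<subseteq> V"
  unfolding nbr_def using sg_edge by fastforce

lemma nbr_irr: "simple_graph V E \<Longrightarrow> x \<notin> nbr E x"
  unfolding nbr_def using sg_edge by fastforce

lemma nbr_fin: "simple_graph V E \<Longrightarrow> finite (nbr E x)"
  using nbr_sub sg_fin finite_subset by metis

lemma nbr_sym: "y \<in> nbr E x \<longleftrightarrow> x \<in> nbr E y"
  unfolding nbr_def by (simp add: insert_commute)

lemma step_K5:
  assumes "minor_step (V, E) (V', E')" "has_K5_minor V' E'"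
  shows "has_K5_minor V E"
  using assms unfolding has_K5_minor_def is_minor_def
  by (meson converse_rtranclp_into_rtranclp)

lemma del_vertices:
  assumes "finite D"
  shows "D \<subseteq> V \<Longrightarrow> minor_step\<^sup>*\<^sup>* (V, E) (V - D, {e \<in> E. e \<inter> D = {}})"
  using assms
proof (induction D rule: finite_induct)
  case empty
  then show ?case by simp
next
  case (insert x D)
  then have 1: "minor_step\<^sup>*\<^sup>* (V, E) (V - D, {e \<in> E. e \<inter> D = {}})" by auto
  have "x \<in> V - D" using insert by auto
  then have "minor_step (V - D, {e \<in> E. e \<inter> D = {}}) (V - D - {x}, {e \<in> {e \<in> E. e \<inter> D = {}}. x \<notin> e})"
    by (rule minor_step.del_vertex)
  moreover have "V - D - {x} = V - insert x D" by auto
  moreover have "{e \<in> {e \<in> E. e \<inter> D = {}}. x \<notin> e} = {e \<in> E. e \<inter> insert x D = {}}" by auto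
  ultimately have "minor_step (V - D, {e \<in> E. e \<inter> D = {}}) (V - insert x D, {e \<in> E. e \<inter> insert x D = {}})"
    by simp
  then show ?case by (rule rtranclp.rtrancl_into_rtrancl[OF 1])
qed

lemma complete_K5:
  assumes "simple_graph V E" "W \<subseteq> V" "card W = 5"
    "\<forall>x\<in>W. \<forall>y\<in>W. x \<noteq> y \<longrightarrow> {x, y} \<in> E"
  shows "has_K5_minor V E"
proof -
  have "finite (V - W)" using sg_fin[OF assms(1)] by simp
  then have "minor_step\<^sup>*\<^sup>* (V, E) (V - (V - W), {e \<in> E. e \<inter> (V - W) = {}})"
    using del_vertices by blast
  moreover have "V - (V - W) = W" using assms by auto
  ultimately have m: "is_minor (W, {e \<in> E. e \<inter> (V - W) = {}}) (V, E)"
    unfolding is_minor_def by simp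
  have "\<forall>x\<in>W. \<forall>y\<in>W. x \<noteq> y \<longrightarrow> {x, y} \<in> {e \<in> E. e \<inter> (V - W) = {}}"
    using assms(4) by auto
  then show ?thesis unfolding has_K5_minor_def using m assms(3) by blast
qed

lemma contr_step:
  assumes "{u, v} \<in> E" "u \<noteq> v"
  shows "minor_step (V, E) (V - {v}, cE E u v)"
  unfolding cE_def using minor_step.contract[OF assms] by simp

lemma contr_simple:
  assumes "simple_graph V E" "{u, v} \<in> E"
  shows "simple_graph (V - {v}) (cE E u v)"
proof -
  have uv: "u \<noteq> v" "u \<in> V" "v \<in> V" using sg_edge[OF assms] by auto
  have "finite (V - {v})" using sg_fin[OF assms(1)] by auto
  moreover have "\<exists>x y. x \<noteq> y \<and> x \<in> V - {v} \<and> y \<in> V - {v} \<and> e = {x, y}" if ein: "e \<in> cE E u v" for e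
  proof (cases "e \<in> E \<and> v \<notin> e")
    case True
    then obtain x y where "x \<noteq> y" "x \<in> V" "y \<in> V" "e = {x, y}" using sg_edge_form[OF assms(1)] by blast
    then show ?thesis using True by auto
  next
    case False
    then obtain w where w: "e = {u, w}" "{v, w} \<in> E" "w \<noteq> u" using ein False unfolding cE_def by blast
    then show ?thesis using sg_edge[OF assms(1) w(2)] uv by auto
  qed
  ultimately show ?thesis unfolding simple_graph_def by blast
qed

lemma del_edge_simple: "simple_graph V E \<Longrightarrow> simple_graph V (E - {e})"
  unfolding simple_graph_def by blast

lemma card_E_le:
  assumes "simple_graph V E"
  shows "card E \<le> card V choose 2"
proof -
  have sub: "E \<subseteq> {B. B \<subseteq> V \<and> card B = 2}"
    using sg_edge_form[OF assms] by fastforce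
  have "card E \<le> card {B. B \<subseteq> V \<and> card B = 2}"
  proof (rule card_mono)
    show "finite {B. B \<subseteq> V \<and> card B = 2}"
      by (rule finite_subset[of _ "Pow V"]) (auto simp: sg_fin[OF assms])
  qed (rule sub)
  then show ?thesis using n_subsets[OF sg_fin[OF assms]] by simp
qed



lemma cliques_fin: "simple_graph V E \<Longrightarrow> finite {S. is_clique V E S}"
  by (rule finite_subset[of _ "Pow V"]) (auto simp: is_clique_def sg_fin)

lemma contr_cliques:
  assumes sg: "simple_graph V E" and uv: "{u, v} \<in> E"
  shows "num_cliques V E \<le> num_cliques (V - {v}) (cE E u v) + 2 * 2 ^ card (nbr E u \<inter> nbr E v)"
proof -
  have uvV: "u \<noteq> v" "u \<in> V" "v \<in> V" using sg_edge[OF sg uv] by auto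
  define C where "C = nbr E u \<inter> nbr E v"
  have finC: "finite C" unfolding C_def using nbr_fin[OF sg] by auto
  define A where "A = {S. is_clique V E S \<and> v \<notin> S}"
  define B where "B = {S. is_clique V E S \<and> v \<in> S \<and> u \<notin> S}"
  define Cc where "Cc = {S. is_clique V E S \<and> v \<in> S \<and> u \<in> S}"
  define f where "f = (\<lambda>S. insert u (S - {v}))"
  define CL' where "CL' = {S. is_clique (V - {v}) (cE E u v) S}"
  have sg': "simple_graph (V - {v}) (cE E u v)" using contr_simple[OF sg uv] .
  have finCL': "finite CL'" unfolding CL'_def using cliques_fin[OF sg'] .
  have fin: "finite A" "finite B" "finite Cc"
    unfolding A_def B_def Cc_def using cliques_fin[OF sg] by (auto intro: finite_subset)
  have split: "{S. is_clique V E S} = A \<union> B \<union> Cc" unfolding A_def B_def Cc_def by auto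
  have AC: "A \<subseteq> CL'"
  proof
    fix S assume "S \<in> A"
    then have S: "S \<subseteq> V" "v \<notin> S" "\<forall>x\<in>S. \<forall>y\<in>S. x \<noteq> y \<longrightarrow> {x, y} \<in> E"
      unfolding A_def is_clique_def by auto
    show "S \<in> CL'" unfolding CL'_def is_clique_def cE_def using S by auto
  qed
  have BC: "f ` B \<subseteq> CL'"
  proof
    fix T assume "T \<in> f ` B"
    then obtain S where "S \<in> B" and T: "T = insert u (S - {v})" unfolding f_def by auto
    then have S: "S \<subseteq> V" "v \<in> S" "u \<notin> S" "\<forall>x\<in>S. \<forall>y\<in>S. x \<noteq> y \<longrightarrow> {x, y} \<in> E"
      unfolding B_def is_clique_def by auto
    have sub: "T \<subseteq> V - {v}" using S uvV T by auto
    have "{x, y} \<in> cE E u v" if "x \<in> T" "y \<in> T" "x \<noteq> y" for x y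
    proof -
      have c1: "{u, y} \<in> cE E u v" if "y \<in> S - {v}" for y
      proof -
        have "{v, y} \<in> E" "y \<noteq> u" using S that by auto
        then show ?thesis unfolding cE_def by blast
      qed
      show ?thesis
      proof (cases "x = u")
        case True
        then show ?thesis using c1 that T by auto
      next
        case False
        show ?thesis
        proof (cases "y = u")
          case True
          then show ?thesis using c1[of x] that T False by (auto simp: insert_commute)
        next
          case False
          then have "x \<in> S - {v}" "y \<in> S - {v}" using that T \<open>x \<noteq> u\<close> by auto
          then show ?thesis using S that unfolding cE_def by auto
        qed
      qed
    qed
    then show "T \<in> CL'" unfolding CL'_def is_clique_def using sub by auto
  qed
  have inj: "inj_on f B"
  proof (rule inj_on_inverseI[where g = "\<lambda>T. insert v (T - {u})"])
    fix S assume "S \<in> B"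
    then show "insert v (f S - {u}) = S" unfolding B_def f_def by auto
  qed
  have AB: "A \<inter> f ` B \<subseteq> insert u ` Pow C"
  proof
    fix T assume "T \<in> A \<inter> f ` B"
    then obtain S where "S \<in> B" and T: "T = insert u (S - {v})" and "T \<in> A" unfolding f_def by auto
    then have S: "S \<subseteq> V" "v \<in> S" "u \<notin> S" "\<forall>x\<in>S. \<forall>y\<in>S. x \<noteq> y \<longrightarrow> {x, y} \<in> E"
      and TT: "\<forall>x\<in>T. \<forall>y\<in>T. x \<noteq> y \<longrightarrow> {x, y} \<in> E"
      unfolding B_def A_def is_clique_def by auto
    have "S - {v} \<subseteq> C"
    proof
      fix w assume w: "w \<in> S - {v}"
      then have "{u, w} \<in> E" using TT T S by auto
      moreover have "{v, w} \<in> E" using S w by auto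
      ultimately show "w \<in> C" unfolding C_def nbr_def by auto
    qed
    then show "T \<in> insert u ` Pow C" using T by auto
  qed
  have CcC: "Cc \<subseteq> (\<lambda>D. insert u (insert v D)) ` Pow C"
  proof
    fix S assume "S \<in> Cc"
    then have S: "S \<subseteq> V" "v \<in> S" "u \<in> S" "\<forall>x\<in>S. \<forall>y\<in>S. x \<noteq> y \<longrightarrow> {x, y} \<in> E"
      unfolding Cc_def is_clique_def by auto
    have "S - {u, v} \<subseteq> C" using S unfolding C_def nbr_def by auto
    moreover have "S = insert u (insert v (S - {u, v}))" using S by auto
    ultimately show "S \<in> (\<lambda>D. insert u (insert v D)) ` Pow C" by blast
  qed
  have cPow: "card (Pow C) = 2 ^ card C" using card_Pow finC by blast
  have c1: "card (A \<inter> f ` B) \<le> 2 ^ card C"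
    using card_mono[OF _ AB] card_image_le[of "Pow C" "insert u"] finC cPow by auto
  have c2: "card Cc \<le> 2 ^ card C"
    using card_mono[OF _ CcC] card_image_le[of "Pow C" "\<lambda>D. insert u (insert v D)"] finC cPow by auto
  have c3: "card A + card (f ` B) = card (A \<union> f ` B) + card (A \<inter> f ` B)"
    using card_Un_Int fin by blast
  have c4: "card (A \<union> f ` B) \<le> card CL'" using AC BC finCL' by (intro card_mono) auto
  have c5: "card (f ` B) = card B" using card_image[OF inj] .
  have "num_cliques V E \<le> card A + card B + card Cc"
    unfolding num_cliques_def split using card_Un_le
    by (metis add_le_mono1 le_trans)
  also have "\<dots> \<le> card CL' + 2 * 2 ^ card C" using c1 c2 c3 c4 c5 by linarith
  finally show ?thesis unfolding CL'_def num_cliques_def C_def .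
qed

lemma contr_edges:
  assumes sg: "simple_graph V E" and uv: "{u, v} \<in> E"
  shows "card E \<le> card (cE E u v) + 1 + card (nbr E u \<inter> nbr E v) \<and> card (cE E u v) < card E"
proof -
  have uvV: "u \<noteq> v" "u \<in> V" "v \<in> V" using sg_edge[OF sg uv] by auto
  define C where "C = nbr E u \<inter> nbr E v"
  have finC: "finite C" unfolding C_def using nbr_fin[OF sg] by auto
  define E0 where "E0 = {e \<in> E. v \<notin> e}"
  define Ev where "Ev = {e \<in> E. v \<in> e}"
  define N' where "N' = {{u, w} | w. {v, w} \<in> E \<and> w \<noteq> u}"
  have finE: "finite E" using sg_finE[OF sg] .
  have fin0: "finite E0" "finite Ev" unfolding E0_def Ev_def using finE by auto
  have finN: "finite (nbr E v)" using nbr_fin[OF sg] .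
  have cE: "cE E u v = E0 \<union> N'" unfolding cE_def E0_def N'_def by auto
  have N'img: "N' = (\<lambda>w. {u, w}) ` (nbr E v - {u})" unfolding N'_def nbr_def by auto
  have injN: "inj_on (\<lambda>w. {u, w}) (nbr E v - {u})"
    by (rule inj_onI) (auto simp: doubleton_eq_iff)
  have cN: "card N' = card (nbr E v - {u})" using N'img card_image[OF injN] by simp
  have uin: "u \<in> nbr E v" unfolding nbr_def using uv by (simp add: insert_commute)
  have cN2: "card N' + 1 = card (nbr E v)" using cN uin finN
    by (metis Suc_eq_plus1 card_Suc_Diff1)
  have Evimg: "Ev = (\<lambda>w. {v, w}) ` nbr E v"
  proof
    show "Ev \<subseteq> (\<lambda>w. {v, w}) ` nbr E v"
    proof
      fix e assume e: "e \<in> Ev"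
      then obtain x y where "x \<noteq> y" "e = {x, y}" using sg_edge_form[OF sg] unfolding Ev_def by blast
      then have "\<exists>w. e = {v, w}" using e unfolding Ev_def by (auto simp: insert_commute)
      then obtain w where "e = {v, w}" by blast
      then show "e \<in> (\<lambda>w. {v, w}) ` nbr E v" using e unfolding Ev_def nbr_def by auto
    qed
  qed (auto simp: Ev_def nbr_def)
  have injv: "inj_on (\<lambda>w. {v, w}) (nbr E v)"
    by (rule inj_onI) (auto simp: doubleton_eq_iff)
  have cEv: "card Ev = card (nbr E v)" using Evimg card_image[OF injv] by simp
  have cE_split: "card E = card E0 + card Ev"
  proof -
    have "E = E0 \<union> Ev" "E0 \<inter> Ev = {}" unfolding E0_def Ev_def by auto
    then show ?thesis using card_Un_disjoint fin0 by metis
  qed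
  have finN': "finite N'" using N'img finN by auto
  have I: "E0 \<inter> N' \<subseteq> (\<lambda>w. {u, w}) ` C"
  proof
    fix e assume "e \<in> E0 \<inter> N'"
    then obtain w where "e = {u, w}" "{v, w} \<in> E" "e \<in> E" unfolding E0_def N'_def by auto
    then show "e \<in> (\<lambda>w. {u, w}) ` C" unfolding C_def nbr_def by auto
  qed
  have cI: "card (E0 \<inter> N') \<le> card C"
    using card_mono[OF _ I] card_image_le[OF finC] finC by (meson finite_imageI le_trans)
  have cU: "card E0 + card N' = card (E0 \<union> N') + card (E0 \<inter> N')"
    using card_Un_Int fin0 finN' by blast
  show ?thesis unfolding C_def[symmetric] cE using cI cU cN2 cEv cE_split by linarith
qed



lemma edges_at:
  assumes sg: "simple_graph V E"
  shows "card {e \<in> E. v \<in> e} = card (nbr E v)"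
proof -
  have Evimg: "{e \<in> E. v \<in> e} = (\<lambda>w. {v, w}) ` nbr E v"
  proof
    show "{e \<in> E. v \<in> e} \<subseteq> (\<lambda>w. {v, w}) ` nbr E v"
    proof
      fix e assume e: "e \<in> {e \<in> E. v \<in> e}"
      then obtain x y where "x \<noteq> y" "e = {x, y}" using sg_edge_form[OF sg] by blast
      then have "\<exists>w. e = {v, w}" using e by (auto simp: insert_commute)
      then obtain w where "e = {v, w}" by blast
      then show "e \<in> (\<lambda>w. {v, w}) ` nbr E v" using e unfolding nbr_def by auto
    qed
  qed (auto simp: nbr_def)
  have injv: "inj_on (\<lambda>w. {v, w}) (nbr E v)"
    by (rule inj_onI) (auto simp: doubleton_eq_iff)
  show ?thesis using Evimg card_image[OF injv] by simp
qed

lemma handshake: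
  assumes sg: "simple_graph V E"
  shows "(\<Sum>v\<in>V. card (nbr E v)) = 2 * card E"
proof -
  have finV: "finite V" using sg_fin[OF sg] .
  have finE: "finite E" using sg_finE[OF sg] .
  have "(\<Sum>v\<in>V. card (nbr E v)) = (\<Sum>v\<in>V. card {e \<in> E. v \<in> e})"
    using edges_at[OF sg] by simp
  also have "\<dots> = (\<Sum>v\<in>V. \<Sum>e\<in>E. if v \<in> e then 1 else 0)"
    using finE by (simp add: sum.inter_filter[symmetric])
  also have "\<dots> = (\<Sum>e\<in>E. \<Sum>v\<in>V. if v \<in> e then 1 else 0)"
    by (rule sum.swap)
  also have "\<dots> = (\<Sum>e\<in>E. card {v \<in> V. v \<in> e})"
    using finV by (simp add: sum.inter_filter[symmetric])
  also have "\<dots> = (\<Sum>e\<in>E. 2)"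
  proof (rule sum.cong)
    fix e assume "e \<in> E"
    then obtain x y where "x \<noteq> y" "x \<in> V" "y \<in> V" "e = {x, y}" using sg_edge_form[OF sg] by blast
    then have "{v \<in> V. v \<in> e} = {x, y}" by auto
    then show "card {v \<in> V. v \<in> e} = 2" using \<open>x \<noteq> y\<close> by simp
  qed simp
  finally show ?thesis by simp
qed

lemma low_deg:
  assumes sg: "simple_graph V E" and "V \<noteq> {}" and "2 * card E < 6 * card V"
  shows "\<exists>v\<in>V. card (nbr E v) \<le> 5"
proof (rule ccontr)
  assume "\<not> ?thesis"
  then have "\<forall>v\<in>V. 6 \<le> card (nbr E v)" by auto
  then have "(\<Sum>v\<in>V. (6::nat)) \<le> (\<Sum>v\<in>V. card (nbr E v))" by (intro sum_mono) auto
  then show False using handshake[OF sg] assms(3) by simp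
qed

lemma K_lemma:
  assumes sg: "simple_graph V E" and vV: "v \<in> V" and ne: "nbr E v \<noteq> {}"
    and le5: "card (nbr E v) \<le> 5"
    and tri: "\<forall>x y. {x, y} \<in> E \<longrightarrow> 3 \<le> card (nbr E x \<inter> nbr E y)"
  shows "has_K5_minor V E"
proof -
  define N where "N = nbr E v"
  have finN: "finite N" unfolding N_def using nbr_fin[OF sg] .
  have vN: "v \<notin> N" unfolding N_def using nbr_irr[OF sg] .
  have NV: "N \<subseteq> V" unfolding N_def using nbr_sub[OF sg] .
  have edgeN: "x \<in> N \<Longrightarrow> {v, x} \<in> E" for x unfolding N_def nbr_def by auto
  have adj: "y \<in> nbr E x \<longleftrightarrow> {x, y} \<in> E" for x y unfolding nbr_def by auto
  have le5': "card N \<le> 5" using le5 N_def by simp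
  have com: "nbr E v \<inter> nbr E x \<subseteq> N - {x}" for x
    unfolding N_def using nbr_irr[OF sg, of x] by auto
  have com3: "3 \<le> card (nbr E v \<inter> nbr E x)" if "x \<in> N" for x
    using tri edgeN[OF that] by blast
  have claim1: False if "x \<in> N" "y \<in> N" "z \<in> N" "x \<noteq> y" "x \<noteq> z" "y \<noteq> z"
      "{x, y} \<notin> E" "{x, z} \<notin> E" for x y z
  proof -
    have "nbr E v \<inter> nbr E x \<subseteq> N - {x, y, z}" using com[of x] that adj by auto
    then have "card (nbr E v \<inter> nbr E x) \<le> card (N - {x, y, z})"
      using finN by (intro card_mono) auto
    also have "\<dots> = card N - 3" using that finN by (subst card_Diff_subset) auto
    finally show False using com3[OF that(1)] le5' by linarith
  qed
  obtain x0 where x0: "x0 \<in> N" using ne N_def by auto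
  have "3 \<le> card (N - {x0})"
    using com3[OF x0] com[of x0] finN card_mono by (metis finite_Diff le_trans)
  then have ge4: "4 \<le> card N" using x0 finN by (simp add: card_Diff_singleton)
  have sym: "{x, y} = {y, x}" for x y :: 'a by (simp add: insert_commute)
  show ?thesis
  proof (cases "card N = 4")
    case True
    have full: "N - {x} \<subseteq> nbr E x" if "x \<in> N" for x
    proof -
      have "card (N - {x}) = 3" using True that finN by (simp add: card_Diff_singleton)
      moreover have "nbr E v \<inter> nbr E x \<subseteq> N - {x}" by (rule com)
      ultimately have "nbr E v \<inter> nbr E x = N - {x}"
        using com3[OF that] finN by (metis card_subset_eq finite_Diff le_antisym card_mono)
      then show ?thesis by auto
    qed
    show ?thesis
    proof (rule complete_K5[OF sg, of "insert v N"])
      show "insert v N \<subseteq> V" using NV vV by auto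
      show "card (insert v N) = 5" using True vN finN by simp
      show "\<forall>x\<in>insert v N. \<forall>y\<in>insert v N. x \<noteq> y \<longrightarrow> {x, y} \<in> E"
      proof (intro ballI impI)
        fix x y assume xy: "x \<in> insert v N" "y \<in> insert v N" "x \<noteq> y"
        show "{x, y} \<in> E"
        proof (cases "x = v")
          case True then show ?thesis using xy edgeN by auto
        next
          case False
          show ?thesis
          proof (cases "y = v")
            case True then show ?thesis using xy edgeN[of x] \<open>x \<noteq> v\<close> by (auto simp: insert_commute)
          next
            case False
            then show ?thesis using xy \<open>x \<noteq> v\<close> full[of x] adj by auto
          qed
        qed
      qed
    qed
  next
    case False
    then have c5: "card N = 5" using ge4 le5' by linarith
    show ?thesis
    proof (cases "\<exists>b\<in>N. \<forall>x\<in>N - {b}. \<forall>y\<in>N - {b}. x \<noteq> y \<longrightarrow> {x, y} \<in> E")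
      case True
      then obtain b where b: "b \<in> N" "\<forall>x\<in>N - {b}. \<forall>y\<in>N - {b}. x \<noteq> y \<longrightarrow> {x, y} \<in> E" by blast
      show ?thesis
      proof (rule complete_K5[OF sg, of "insert v (N - {b})"])
        show "insert v (N - {b}) \<subseteq> V" using NV vV by auto
        show "card (insert v (N - {b})) = 5" using c5 vN finN b by (simp add: card_Diff_singleton)
        show "\<forall>x\<in>insert v (N - {b}). \<forall>y\<in>insert v (N - {b}). x \<noteq> y \<longrightarrow> {x, y} \<in> E"
        proof (intro ballI impI)
          fix x y assume xy: "x \<in> insert v (N - {b})" "y \<in> insert v (N - {b})" "x \<noteq> y"
          show "{x, y} \<in> E"
          proof (cases "x = v")
            case True then show ?thesis using xy edgeN by auto
          next
            case False
            show ?thesis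
            proof (cases "y = v")
              case True then show ?thesis using xy edgeN[of x] \<open>x \<noteq> v\<close> by (auto simp: insert_commute)
            next
              case False
              then show ?thesis using xy \<open>x \<noteq> v\<close> b by auto
            qed
          qed
        qed
      qed
    next
      case False
      then have nc: "\<And>b. b \<in> N \<Longrightarrow> \<exists>x\<in>N - {b}. \<exists>y\<in>N - {b}. x \<noteq> y \<and> {x, y} \<notin> E" by blast
      obtain a b where ab: "a \<in> N" "b \<in> N" "a \<noteq> b" "{a, b} \<notin> E" using nc[OF x0] by blast
      obtain c d where cd: "c \<in> N" "d \<in> N" "c \<noteq> b" "d \<noteq> b" "c \<noteq> d" "{c, d} \<notin> E"
        using nc[OF ab(2)] by blast
      have ca: "c \<noteq> a"
      proof
        assume "c = a"
        then show False using claim1[of a b d] ab cd by auto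
      qed
      have da: "d \<noteq> a"
      proof
        assume "d = a"
        then show False using claim1[of a b c] ab cd sym by metis
      qed
      have "card (N - {a, b, c, d}) = 1" using c5 finN ab cd ca da by (subst card_Diff_subset) auto
      then obtain e where e: "e \<in> N" "e \<noteq> a" "e \<noteq> b" "e \<noteq> c" "e \<noteq> d"
        by (metis DiffE card_1_singletonE insertCI)
      have ad: "{a, d} \<in> E" using claim1[of a b d] ab cd da by auto
      have ae: "{a, e} \<in> E" using claim1[of a b e] ab e by auto
      have ac: "{c, a} \<in> E" using claim1[of a b c] ab cd ca sym by metis
      have de: "{d, e} \<in> E" using claim1[of d c e] cd e sym by metis
      have bd: "{b, d} \<in> E" using claim1[of b a d] ab cd da sym by metis
      have be: "{b, e} \<in> E" using claim1[of b a e] ab e sym by metis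
      have bc: "{b, c} \<in> E" using claim1[of b a c] ab cd ca sym by metis
      have va: "{v, a} \<in> E" and vb: "{v, b} \<in> E" and vd: "{v, d} \<in> E" and ve: "{v, e} \<in> E"
        using edgeN ab cd e by auto
      have vc: "v \<noteq> c" "v \<noteq> a" "v \<noteq> b" "v \<noteq> d" "v \<noteq> e" using vN ab cd e by auto
      let ?E' = "cE E b c"
      have sg': "simple_graph (V - {c}) ?E'" using contr_simple[OF sg bc] .
      have in0: "\<And>x y. {x, y} \<in> E \<Longrightarrow> x \<noteq> c \<Longrightarrow> y \<noteq> c \<Longrightarrow> {x, y} \<in> ?E'"
        unfolding cE_def by auto
      have ba: "{b, a} \<in> ?E'" using ac ab(3) unfolding cE_def
        by (auto simp: insert_commute)
      have E'facts: "{v, a} \<in> ?E'" "{v, b} \<in> ?E'" "{v, d} \<in> ?E'" "{v, e} \<in> ?E'"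
        "{a, d} \<in> ?E'" "{a, e} \<in> ?E'" "{d, e} \<in> ?E'" "{b, d} \<in> ?E'" "{b, e} \<in> ?E'" "{b, a} \<in> ?E'"
        using in0 va vb vd ve ad ae de bd be ba vc ca cd e by auto
      have E'sym: "{x, y} \<in> ?E' \<Longrightarrow> {y, x} \<in> ?E'" for x y by (simp add: insert_commute)
      have "has_K5_minor (V - {c}) ?E'"
      proof (rule complete_K5[OF sg', of "{v, a, b, d, e}"])
        show "{v, a, b, d, e} \<subseteq> V - {c}" using NV vV ab cd e vc ca by auto
        show "card {v, a, b, d, e} = 5" using vc ab cd e da by auto
        show "\<forall>x\<in>{v, a, b, d, e}. \<forall>y\<in>{v, a, b, d, e}. x \<noteq> y \<longrightarrow> {x, y} \<in> ?E'"
          using E'facts E'sym by blast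
      qed
      then show ?thesis using step_K5 contr_step[OF bc] cd by blast
    qed
  qed
qed

lemma iso_del:
  assumes sg: "simple_graph V E" and "nbr E v = {}" and "v \<in> V"
  shows "minor_step (V, E) (V - {v}, E)" and "simple_graph (V - {v}) E"
    and "num_cliques V E \<le> num_cliques (V - {v}) E + 1"
proof -
  have vnot: "v \<notin> e" if eE: "e \<in> E" for e
    proof
      assume "v \<in> e"
      obtain x y where "e = {x, y}" using sg_edge_form[OF sg eE] by blast
      then have "\<exists>w. {v, w} \<in> E" using eE \<open>v \<in> e\<close> by (auto simp: insert_commute)
      then show False using assms(2) unfolding nbr_def by auto
    qed
  have eq: "{e \<in> E. v \<notin> e} = E" using vnot by auto
  show "minor_step (V, E) (V - {v}, E)" using minor_step.del_vertex[OF assms(3), of E] eq by simp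
  show sg': "simple_graph (V - {v}) E"
  proof -
    have "\<exists>x y. x \<noteq> y \<and> x \<in> V - {v} \<and> y \<in> V - {v} \<and> e = {x, y}" if eE2: "e \<in> E" for e
    proof -
      obtain x y where "x \<noteq> y" "x \<in> V" "y \<in> V" "e = {x, y}" using sg_edge_form[OF sg eE2] by blast
      then show ?thesis using vnot[OF eE2] by auto
    qed
    then show ?thesis using sg_fin[OF sg] unfolding simple_graph_def by auto
  qed
  have "{S. is_clique V E S} \<subseteq> insert {v} {S. is_clique (V - {v}) E S}"
  proof
    fix S assume S: "S \<in> {S. is_clique V E S}"
    show "S \<in> insert {v} {S. is_clique (V - {v}) E S}"
    proof (cases "v \<in> S")
      case True
      have "S = {v}"
      proof (rule ccontr)
        assume "S \<noteq> {v}"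
        then obtain w where "w \<in> S" "w \<noteq> v" using True by auto
        then have "{v, w} \<in> E" using S True unfolding is_clique_def by auto
        then show False using assms(2) unfolding nbr_def by auto
      qed
      then show ?thesis by simp
    next
      case False
      then show ?thesis using S unfolding is_clique_def by auto
    qed
  qed
  then have "num_cliques V E \<le> card (insert {v} {S. is_clique (V - {v}) E S})"
    unfolding num_cliques_def using cliques_fin[OF sg'] by (intro card_mono) auto
  also have "\<dots> \<le> num_cliques (V - {v}) E + 1"
    unfolding num_cliques_def using card_insert_le_m1 cliques_fin[OF sg']
    by (simp add: card_insert_if)
  finally show "num_cliques V E \<le> num_cliques (V - {v}) E + 1" .
qed



lemma mader:
  "simple_graph V E \<Longrightarrow> \<not> has_K5_minor V E \<Longrightarrow> 3 \<le> card V \<Longrightarrow> card E + 6 \<le> 3 * card V"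
proof (induction "card V + card E" arbitrary: V E rule: less_induct)
  case less
  note sg = less.prems(1) and nK = less.prems(2) and n3 = less.prems(3)
  have finV: "finite V" using sg_fin[OF sg] .
  have finE: "finite E" using sg_finE[OF sg] .
  show ?case
  proof (rule ccontr)
    assume H: "\<not> card E + 6 \<le> 3 * card V"
    have cE: "card E \<le> card V * (card V - 1) div 2" using card_E_le[OF sg] by (simp add: choose_two)
    consider "card V = 3" | "card V = 4" | "card V = 5" | "card V \<ge> 6" using n3 by linarith
    then show False
    proof cases
      case 1 then show ?thesis using H cE by simp
    next
      case 2 then show ?thesis using H cE by simp
    next
      case 3
      define P where "P = {B. B \<subseteq> V \<and> card B = 2}"
      have sub: "E \<subseteq> P" unfolding P_def using sg_edge_form[OF sg] by fastforce
      have finP: "finite P" unfolding P_def by (rule finite_subset[of _ "Pow V"]) (auto simp: finV)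
      have cP: "card P = 10" unfolding P_def using n_subsets[OF finV, of 2] 3 by (simp add: choose_two)
      have "card E \<ge> 10" using H 3 by simp
      then have "E = P" using card_subset_eq[OF finP sub] cP card_mono[OF finP sub] by simp
      then have "\<forall>x\<in>V. \<forall>y\<in>V. x \<noteq> y \<longrightarrow> {x, y} \<in> E" unfolding P_def by auto
      then have "has_K5_minor V E" using complete_K5[OF sg, of V] 3 by simp
      then show False using nK by simp
    next
      case 4
      have eq: "card E + 5 = 3 * card V"
      proof (rule ccontr)
        assume "card E + 5 \<noteq> 3 * card V"
        then have gt: "card E + 5 > 3 * card V" using H by linarith
        then obtain e where e: "e \<in> E" using 4 by fastforce
        have sg': "simple_graph V (E - {e})" using del_edge_simple[OF sg] .
        have nK': "\<not> has_K5_minor V (E - {e})"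
          using nK step_K5 minor_step.del_edge[OF e, of V] by blast
        have c: "card (E - {e}) = card E - 1" using e finE by simp
        have "card V + card (E - {e}) < card V + card E" using c e finE
          by (metis card_Diff1_less nat_add_left_cancel_less)
        then have "card (E - {e}) + 6 \<le> 3 * card V" using less.hyps sg' nK' n3 by blast
        then show False using gt c e by linarith
      qed
      have tri: "\<forall>x y. {x, y} \<in> E \<longrightarrow> 3 \<le> card (nbr E x \<inter> nbr E y)"
      proof (intro allI impI, rule ccontr)
        fix x y assume xy: "{x, y} \<in> E" and lt: "\<not> 3 \<le> card (nbr E x \<inter> nbr E y)"
        have xyV: "x \<noteq> y" "y \<in> V" using sg_edge[OF sg xy] by auto
        have sg': "simple_graph (V - {y}) (cE E x y)" using contr_simple[OF sg xy] .
        have nK': "\<not> has_K5_minor (V - {y}) (cE E x y)"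
          using nK step_K5 contr_step[OF xy xyV(1)] by blast
        have ce: "card E \<le> card (cE E x y) + 1 + card (nbr E x \<inter> nbr E y)"
          "card (cE E x y) < card E" using contr_edges[OF sg xy] by auto
        have cV: "card (V - {y}) = card V - 1" using xyV finV by simp
        have lt1: "card (V - {y}) + card (cE E x y) < card V + card E" using cV ce 4 by linarith
        have "3 \<le> card (V - {y})" using cV 4 by linarith
        then have "card (cE E x y) + 6 \<le> 3 * card (V - {y})"
          by (rule less.hyps[OF lt1 sg' nK'])
        then show False using ce cV eq lt 4 by linarith
      qed
      have noiso: "nbr E v \<noteq> {}" if vV: "v \<in> V" for v
      proof
        assume iso: "nbr E v = {}"
        have sg': "simple_graph (V - {v}) E" using iso_del[OF sg iso vV] by blast
        have nK': "\<not> has_K5_minor (V - {v}) E" using iso_del[OF sg iso vV] nK step_K5 by blast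
        have cV: "card (V - {v}) = card V - 1" using vV finV by simp
        have lt1: "card (V - {v}) + card E < card V + card E" using cV 4 by linarith
        have "3 \<le> card (V - {v})" using cV 4 by linarith
        then have "card E + 6 \<le> 3 * card (V - {v})"
          by (rule less.hyps[OF lt1 sg' nK'])
        then show False using eq cV 4 by linarith
      qed
      have "V \<noteq> {}" using 4 by auto
      then obtain v where v: "v \<in> V" "card (nbr E v) \<le> 5" using low_deg[OF sg] eq by fastforce
      then have "has_K5_minor V E" using K_lemma[OF sg v(1) noiso[OF v(1)] v(2) tri] by blast
      then show False using nK by simp
    qed
  qed
qed

theorem main_thm:
  "simple_graph V E \<Longrightarrow> 3 \<le> card V \<Longrightarrow> \<not> has_K5_minor V E \<Longrightarrow> num_cliques V E \<le> 8 * (card V - 2)"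
proof (induction "card V" arbitrary: V E rule: less_induct)
  case less
  note sg = less.prems(1) and n3 = less.prems(2) and nK = less.prems(3)
  have finV: "finite V" using sg_fin[OF sg] .
  show ?case
  proof (rule ccontr)
    assume H: "\<not> num_cliques V E \<le> 8 * (card V - 2)"
    show False
    proof (cases "card V = 3")
      case True
      have "num_cliques V E \<le> card (Pow V)" unfolding num_cliques_def
        by (rule card_mono) (auto simp: finV is_clique_def)
      then show False using H True card_Pow[OF finV] by simp
    next
      case False
      then have n4: "card V \<ge> 4" using n3 by linarith
      have tri: "\<forall>x y. {x, y} \<in> E \<longrightarrow> 3 \<le> card (nbr E x \<inter> nbr E y)"
      proof (intro allI impI, rule ccontr)
        fix x y assume xy: "{x, y} \<in> E" and lt: "\<not> 3 \<le> card (nbr E x \<inter> nbr E y)"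
        have xyV: "x \<noteq> y" "y \<in> V" using sg_edge[OF sg xy] by auto
        have sg': "simple_graph (V - {y}) (cE E x y)" using contr_simple[OF sg xy] .
        have nK': "\<not> has_K5_minor (V - {y}) (cE E x y)"
          using nK step_K5 contr_step[OF xy xyV(1)] by blast
        have cV: "card (V - {y}) = card V - 1" using xyV finV by simp
        have "num_cliques (V - {y}) (cE E x y) \<le> 8 * (card (V - {y}) - 2)"
          using less.hyps[of "V - {y}"] sg' nK' cV n4 by simp
        moreover have "num_cliques V E \<le> num_cliques (V - {y}) (cE E x y) + 2 * 2 ^ card (nbr E x \<inter> nbr E y)"
          using contr_cliques[OF sg xy] .
        moreover have "(2::nat) ^ card (nbr E x \<inter> nbr E y) \<le> 2 ^ 2"
          using lt by (intro power_increasing) auto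
        ultimately show False using H cV n4 by simp
      qed
      have noiso: "nbr E v \<noteq> {}" if vV: "v \<in> V" for v
      proof
        assume iso: "nbr E v = {}"
        have sg': "simple_graph (V - {v}) E" using iso_del[OF sg iso vV] by blast
        have nK': "\<not> has_K5_minor (V - {v}) E" using iso_del[OF sg iso vV] nK step_K5 by blast
        have cV: "card (V - {v}) = card V - 1" using vV finV by simp
        have "num_cliques (V - {v}) E \<le> 8 * (card (V - {v}) - 2)"
          using less.hyps[of "V - {v}"] sg' nK' cV n4 by simp
        then show False using iso_del(3)[OF sg iso vV] H cV n4 by simp
      qed
      have m: "card E + 6 \<le> 3 * card V" using mader[OF sg nK n3] .
      have "V \<noteq> {}" using n4 by auto
      then obtain v where v: "v \<in> V" "card (nbr E v) \<le> 5" using low_deg[OF sg] m by fastforce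
      then have "has_K5_minor V E" using K_lemma[OF sg v(1) noiso[OF v(1)] v(2) tri] by blast
      then show False using nK by simp
    qed
  qed
qed


theorem theorem6:
  fixes V :: "'a set" and E :: "'a set set"
  assumes "simple_graph V E" and "card V \<ge> 3" and "\<not> has_K5_minor V E"
  shows "num_cliques V E \<le> 8 * (card V - 2)"
  using assms by (rule main_thm)

end
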